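(* For every positive integer $n$, there is a temporal graph $G$ on $n$ vertices and a vertex $s$ of $G$ such that every single-source temporal preserver of $G$ with respect to $s$ has size $\Theta(n^2)$.
   Context: A temporal graph is an undirected graph $G=(V,E)$ with a labeling $\lambda:E\to\mathbb{N}^+$. A temporal path is a path whose traversed edges have non-decreasing labels in the order of traversal; its length is its number of edges, and $d_G(u,v)$ is the minimum length of a temporal path from $u$ to $v$ in $G$ ($+\infty$ if none). A single-source temporal preserver of $G$ w.r.t. $s$ is a subgraph $H$ with $V(H)=V$, $E(H)\subseteq E$ (same labels), such that $d_H(s,v)= d_G(s,v)$ for every $v\in V$. Its size is its number of edges. *)

theory Defs
  imports Main "HOL-Library.Extended_Nat"
begin

definition temporal_graph :: "'a set \<Rightarrow> 'a set set \<Rightarrow> ('a set \<Rightarrow> nat) \<Rightarrow> bool" where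
  "temporal_graph V E lam \<longleftrightarrow> finite V \<and>
     E \<subseteq> {{u, v} | u v. u \<in> V \<and> v \<in> V \<and> u \<noteq> v} \<and>
     (\<forall>e\<in>E. lam e > 0)"

definition temporal_path :: "'a set \<Rightarrow> 'a set set \<Rightarrow> ('a set \<Rightarrow> nat) \<Rightarrow> 'a list \<Rightarrow> bool" where
  "temporal_path V E lam p \<longleftrightarrow> p \<noteq> [] \<and> distinct p \<and> set p \<subseteq> V \<and>
     (\<forall>i. Suc i < length p \<longrightarrow> {p ! i, p ! Suc i} \<in> E) \<and>
     (\<forall>i. Suc (Suc i) < length p \<longrightarrow>
          lam {p ! i, p ! Suc i} \<le> lam {p ! Suc i, p ! Suc (Suc i)})"

definition temporal_dist :: "'a set \<Rightarrow> 'a set set \<Rightarrow> ('a set \<Rightarrow> nat) \<Rightarrow> 'a \<Rightarrow> 'a \<Rightarrow> enat" where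
  "temporal_dist V E lam u v =
     Inf {enat (length p - 1) | p. temporal_path V E lam p \<and> hd p = u \<and> last p = v}"

definition ss_temporal_preserver ::
  "'a set \<Rightarrow> 'a set set \<Rightarrow> ('a set \<Rightarrow> nat) \<Rightarrow> 'a \<Rightarrow> 'a set set \<Rightarrow> bool" where
  "ss_temporal_preserver V E lam s H \<longleftrightarrow> H \<subseteq> E \<and>
     (\<forall>v\<in>V. temporal_dist V H lam s v = temporal_dist V E lam s v)"

end

theory Submission
  imports Defs
begin

definition sg :: "nat \<Rightarrow> nat \<Rightarrow> nat \<Rightarrow> nat" where
"sg k m h = (if h = 0 then 0 else if h = 2*k+1 then 6*k+m else if odd h then m + (h - 1) div 2 else 2*k + 3*m + h div 2 - 1)"

lemma sgA: "sg k m 0 = 0" unfolding sg_def by simp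
lemma sgB: "sg k m (2*k+1) = 6*k+m" unfolding sg_def by simp
lemma sgC: "t < k \<Longrightarrow> sg k m (2*t+1) = m+t" unfolding sg_def by simp
lemma sgD: "t < k \<Longrightarrow> sg k m (2*t+2) = 2*k+3*m+t" unfolding sg_def by simp

lemma h_cases: "(h::nat) \<le> 2*k+1 \<Longrightarrow> (h = 0 \<Longrightarrow> P) \<Longrightarrow> (h = 2*k+1 \<Longrightarrow> P) \<Longrightarrow> (\<And>t. t < k \<Longrightarrow> h = 2*t+1 \<Longrightarrow> P) \<Longrightarrow> (\<And>t. t < k \<Longrightarrow> h = 2*t+2 \<Longrightarrow> P) \<Longrightarrow> P"
proof -
  assume a: "h \<le> 2*k+1" "h = 0 \<Longrightarrow> P" "h = 2*k+1 \<Longrightarrow> P" "\<And>t. t < k \<Longrightarrow> h = 2*t+1 \<Longrightarrow> P" "\<And>t. t < k \<Longrightarrow> h = 2*t+2 \<Longrightarrow> P"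
  have "h = 0 \<or> h = 2*k+1 \<or> (\<exists>t. t < k \<and> h = 2*t+1) \<or> (\<exists>t. t < k \<and> h = 2*t+2)" using a(1) by presburger
  then show P using a(2-5) by blast
qed

lemma sg_inj: "1 \<le> m \<Longrightarrow> m \<le> k \<Longrightarrow> h \<le> 2*k+1 \<Longrightarrow> h' \<le> 2*k+1 \<Longrightarrow> sg k m h = sg k m h' \<Longrightarrow> h = h'"
  by (erule h_cases[of h k]; erule h_cases[of h' k]; simp only: sgA sgB sgC sgD; linarith)

lemma sg_mono: "1 \<le> m \<Longrightarrow> m < m' \<Longrightarrow> m' \<le> k \<Longrightarrow> h \<le> 2*k+1 \<Longrightarrow> h' \<le> 2*k+1 \<Longrightarrow> sg k m h = sg k m' h' \<Longrightarrow> h' < h \<or> (h = 0 \<and> h' = 0)"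
  by (erule h_cases[of h k]; erule h_cases[of h' k]; simp only: sgA sgB sgC sgD; (simp | linarith))

lemma sg_tgt: "1 \<le> m \<Longrightarrow> m \<le> k \<Longrightarrow> 1 \<le> m' \<Longrightarrow> m' \<le> k \<Longrightarrow> h' \<le> 2*k+1 \<Longrightarrow> sg k m' h' = sg k m (2*k+1) \<Longrightarrow> m' = m"
  by (erule h_cases[of h' k]; simp only: sgA sgB sgC sgD; linarith)

lemma sg_range: "1 \<le> m \<Longrightarrow> m \<le> k \<Longrightarrow> h \<le> 2*k+1 \<Longrightarrow> sg k m h \<le> 7*k"
  by (erule h_cases[of h k]; simp only: sgA sgB sgC sgD; linarith)


definition ed where "ed k m h = {sg k m (h-1), sg k m h}"

lemma ed_cases: "1 \<le> (h::nat) \<Longrightarrow> h \<le> 2*k+1 \<Longrightarrow> h = 1 \<or> h = 2*k+1 \<or> (\<exists>t. h = 2*t+2 \<and> t < k) \<or> (\<exists>t. h = 2*t+3 \<and> t+1 < k)"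
  by presburger

lemma ed1: "1 \<le> k \<Longrightarrow> ed k m 1 = {0, m}"
  unfolding ed_def sg_def by auto
lemma ed2: "t < k \<Longrightarrow> ed k m (2*t+2) = {m+t, 2*k+3*m+t}"
  unfolding ed_def sg_def by auto
lemma ed3: "t+1 < k \<Longrightarrow> ed k m (2*t+3) = {2*k+3*m+t, m+t+1}"
  unfolding ed_def sg_def by auto
lemma ed4: "1 \<le> k \<Longrightarrow> ed k m (2*k+1) = {2*k+3*m+k-1, 6*k+m}"
  unfolding ed_def sg_def by auto

lemma par: "2*(a::nat)+1 \<noteq> 2*b"
  by (metis Suc_eq_plus1 even_Suc dvd_triv_left)

lemma ec11: "1 \<le> m \<Longrightarrow> m \<le> k \<Longrightarrow> 1 \<le> m' \<Longrightarrow> m' \<le> k \<Longrightarrow> 1 \<le> k \<Longrightarrow> 1 \<le> k \<Longrightarrow> ({0, m}::nat set) = {0, m'} \<Longrightarrow> m = m'"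
  unfolding doubleton_eq_iff by (elim disjE conjE; linarith)

lemma ec12: "1 \<le> m \<Longrightarrow> m \<le> k \<Longrightarrow> 1 \<le> m' \<Longrightarrow> m' \<le> k \<Longrightarrow> 1 \<le> k \<Longrightarrow> t' < k \<Longrightarrow> ({0, m}::nat set) = {m'+t', 2*k+3*m'+t'} \<Longrightarrow> False"
  unfolding doubleton_eq_iff by (elim disjE conjE; linarith)

lemma ec13: "1 \<le> m \<Longrightarrow> m \<le> k \<Longrightarrow> 1 \<le> m' \<Longrightarrow> m' \<le> k \<Longrightarrow> 1 \<le> k \<Longrightarrow> t'+1 < k \<Longrightarrow> ({0, m}::nat set) = {2*k+3*m'+t', m'+t'+1} \<Longrightarrow> False"
  unfolding doubleton_eq_iff by (elim disjE conjE; linarith)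

lemma ec14: "1 \<le> m \<Longrightarrow> m \<le> k \<Longrightarrow> 1 \<le> m' \<Longrightarrow> m' \<le> k \<Longrightarrow> 1 \<le> k \<Longrightarrow> 1 \<le> k \<Longrightarrow> ({0, m}::nat set) = {2*k+3*m'+k-1, 6*k+m'} \<Longrightarrow> False"
  unfolding doubleton_eq_iff by (elim disjE conjE; linarith)

lemma ec21: "1 \<le> m \<Longrightarrow> m \<le> k \<Longrightarrow> 1 \<le> m' \<Longrightarrow> m' \<le> k \<Longrightarrow> t < k \<Longrightarrow> 1 \<le> k \<Longrightarrow> ({m+t, 2*k+3*m+t}::nat set) = {0, m'} \<Longrightarrow> False"
  unfolding doubleton_eq_iff by (elim disjE conjE; linarith)

lemma ec22: "1 \<le> m \<Longrightarrow> m \<le> k \<Longrightarrow> 1 \<le> m' \<Longrightarrow> m' \<le> k \<Longrightarrow> t < k \<Longrightarrow> t' < k \<Longrightarrow> ({m+t, 2*k+3*m+t}::nat set) = {m'+t', 2*k+3*m'+t'} \<Longrightarrow> m = m' \<and> t = t'"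
  unfolding doubleton_eq_iff by (elim disjE conjE; linarith)

lemma ec23: "1 \<le> m \<Longrightarrow> m \<le> k \<Longrightarrow> 1 \<le> m' \<Longrightarrow> m' \<le> k \<Longrightarrow> t < k \<Longrightarrow> t'+1 < k \<Longrightarrow> ({m+t, 2*k+3*m+t}::nat set) = {2*k+3*m'+t', m'+t'+1} \<Longrightarrow> False"
  unfolding doubleton_eq_iff
  apply (elim disjE conjE)
   apply linarith
  apply (subgoal_tac "2*m+1 = 2*m'")
   apply (metis par)
  apply linarith
  done

lemma ec24: "1 \<le> m \<Longrightarrow> m \<le> k \<Longrightarrow> 1 \<le> m' \<Longrightarrow> m' \<le> k \<Longrightarrow> t < k \<Longrightarrow> 1 \<le> k \<Longrightarrow> ({m+t, 2*k+3*m+t}::nat set) = {2*k+3*m'+k-1, 6*k+m'} \<Longrightarrow> False"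
  unfolding doubleton_eq_iff by (elim disjE conjE; linarith)

lemma ec31: "1 \<le> m \<Longrightarrow> m \<le> k \<Longrightarrow> 1 \<le> m' \<Longrightarrow> m' \<le> k \<Longrightarrow> t+1 < k \<Longrightarrow> 1 \<le> k \<Longrightarrow> ({2*k+3*m+t, m+t+1}::nat set) = {0, m'} \<Longrightarrow> False"
  unfolding doubleton_eq_iff by (elim disjE conjE; linarith)

lemma ec32: "1 \<le> m \<Longrightarrow> m \<le> k \<Longrightarrow> 1 \<le> m' \<Longrightarrow> m' \<le> k \<Longrightarrow> t+1 < k \<Longrightarrow> t' < k \<Longrightarrow> ({2*k+3*m+t, m+t+1}::nat set) = {m'+t', 2*k+3*m'+t'} \<Longrightarrow> False"
  unfolding doubleton_eq_iff
  apply (elim disjE conjE)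
   apply linarith
  apply (subgoal_tac "2*m'+1 = 2*m")
   apply (metis par)
  apply linarith
  done

lemma ec33: "1 \<le> m \<Longrightarrow> m \<le> k \<Longrightarrow> 1 \<le> m' \<Longrightarrow> m' \<le> k \<Longrightarrow> t+1 < k \<Longrightarrow> t'+1 < k \<Longrightarrow> ({2*k+3*m+t, m+t+1}::nat set) = {2*k+3*m'+t', m'+t'+1} \<Longrightarrow> m = m' \<and> t = t'"
  unfolding doubleton_eq_iff by (elim disjE conjE; linarith)

lemma ec34: "1 \<le> m \<Longrightarrow> m \<le> k \<Longrightarrow> 1 \<le> m' \<Longrightarrow> m' \<le> k \<Longrightarrow> t+1 < k \<Longrightarrow> 1 \<le> k \<Longrightarrow> ({2*k+3*m+t, m+t+1}::nat set) = {2*k+3*m'+k-1, 6*k+m'} \<Longrightarrow> False"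
  unfolding doubleton_eq_iff by (elim disjE conjE; linarith)

lemma ec41: "1 \<le> m \<Longrightarrow> m \<le> k \<Longrightarrow> 1 \<le> m' \<Longrightarrow> m' \<le> k \<Longrightarrow> 1 \<le> k \<Longrightarrow> 1 \<le> k \<Longrightarrow> ({2*k+3*m+k-1, 6*k+m}::nat set) = {0, m'} \<Longrightarrow> False"
  unfolding doubleton_eq_iff by (elim disjE conjE; linarith)

lemma ec42: "1 \<le> m \<Longrightarrow> m \<le> k \<Longrightarrow> 1 \<le> m' \<Longrightarrow> m' \<le> k \<Longrightarrow> 1 \<le> k \<Longrightarrow> t' < k \<Longrightarrow> ({2*k+3*m+k-1, 6*k+m}::nat set) = {m'+t', 2*k+3*m'+t'} \<Longrightarrow> False"
  unfolding doubleton_eq_iff by (elim disjE conjE; linarith)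

lemma ec43: "1 \<le> m \<Longrightarrow> m \<le> k \<Longrightarrow> 1 \<le> m' \<Longrightarrow> m' \<le> k \<Longrightarrow> 1 \<le> k \<Longrightarrow> t'+1 < k \<Longrightarrow> ({2*k+3*m+k-1, 6*k+m}::nat set) = {2*k+3*m'+t', m'+t'+1} \<Longrightarrow> False"
  unfolding doubleton_eq_iff by (elim disjE conjE; linarith)

lemma ec44: "1 \<le> m \<Longrightarrow> m \<le> k \<Longrightarrow> 1 \<le> m' \<Longrightarrow> m' \<le> k \<Longrightarrow> 1 \<le> k \<Longrightarrow> 1 \<le> k \<Longrightarrow> ({2*k+3*m+k-1, 6*k+m}::nat set) = {2*k+3*m'+k-1, 6*k+m'} \<Longrightarrow> m = m'"
  unfolding doubleton_eq_iff by (elim disjE conjE; linarith)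

lemma edc11:
  assumes m: "1 \<le> m" "m \<le> k" "1 \<le> m'" "m' \<le> k" and hX: "h = 1" and hY: "h' = 1"
    and e: "ed k m h = ed k m' h'"
  shows "m = m' \<and> h = h'"
proof -
  have k1: "1 \<le> k" using m by simp
  have r: "ed k m h = {0, m}" using hX ed1[OF k1] by simp
  have rp: "ed k m' h' = {0, m'}" using hY ed1[OF k1] by simp
  have "{0, m} = {0, m'}" using e r rp by simp
  from ec11[OF m k1 k1 this] show ?thesis using hX hY by simp
qed

lemma edc12:
  assumes m: "1 \<le> m" "m \<le> k" "1 \<le> m'" "m' \<le> k" and hX: "h = 1" and hY: "\<exists>t'. h' = 2*t'+2 \<and> t' < k"
    and e: "ed k m h = ed k m' h'"
  shows "m = m' \<and> h = h'"
proof -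
  have k1: "1 \<le> k" using m by simp
  have r: "ed k m h = {0, m}" using hX ed1[OF k1] by simp
  obtain t' where op: "h' = 2*t'+2" "t' < k" using hY by blast
  have rp: "ed k m' h' = {m'+t', 2*k+3*m'+t'}" using op ed2 by simp
  have "{0, m} = {m'+t', 2*k+3*m'+t'}" using e r rp by simp
  from ec12[OF m k1 op(2) this] show ?thesis by simp
qed

lemma edc13:
  assumes m: "1 \<le> m" "m \<le> k" "1 \<le> m'" "m' \<le> k" and hX: "h = 1" and hY: "\<exists>t'. h' = 2*t'+3 \<and> t'+1 < k"
    and e: "ed k m h = ed k m' h'"
  shows "m = m' \<and> h = h'"
proof -
  have k1: "1 \<le> k" using m by simp
  have r: "ed k m h = {0, m}" using hX ed1[OF k1] by simp
  obtain t' where op: "h' = 2*t'+3" "t'+1 < k" using hY by blast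
  have rp: "ed k m' h' = {2*k+3*m'+t', m'+t'+1}" using op ed3 by simp
  have "{0, m} = {2*k+3*m'+t', m'+t'+1}" using e r rp by simp
  from ec13[OF m k1 op(2) this] show ?thesis by simp
qed

lemma edc14:
  assumes m: "1 \<le> m" "m \<le> k" "1 \<le> m'" "m' \<le> k" and hX: "h = 1" and hY: "h' = 2*k+1"
    and e: "ed k m h = ed k m' h'"
  shows "m = m' \<and> h = h'"
proof -
  have k1: "1 \<le> k" using m by simp
  have r: "ed k m h = {0, m}" using hX ed1[OF k1] by simp
  have rp: "ed k m' h' = {2*k+3*m'+k-1, 6*k+m'}" using hY ed4[OF k1] by simp
  have "{0, m} = {2*k+3*m'+k-1, 6*k+m'}" using e r rp by simp
  from ec14[OF m k1 k1 this] show ?thesis by simp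
qed

lemma edc21:
  assumes m: "1 \<le> m" "m \<le> k" "1 \<le> m'" "m' \<le> k" and hX: "\<exists>t. h = 2*t+2 \<and> t < k" and hY: "h' = 1"
    and e: "ed k m h = ed k m' h'"
  shows "m = m' \<and> h = h'"
proof -
  have k1: "1 \<le> k" using m by simp
  obtain t where o: "h = 2*t+2" "t < k" using hX by blast
  have r: "ed k m h = {m+t, 2*k+3*m+t}" using o ed2 by simp
  have rp: "ed k m' h' = {0, m'}" using hY ed1[OF k1] by simp
  have "{m+t, 2*k+3*m+t} = {0, m'}" using e r rp by simp
  from ec21[OF m o(2) k1 this] show ?thesis by simp
qed

lemma edc22:
  assumes m: "1 \<le> m" "m \<le> k" "1 \<le> m'" "m' \<le> k" and hX: "\<exists>t. h = 2*t+2 \<and> t < k" and hY: "\<exists>t'. h' = 2*t'+2 \<and> t' < k"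
    and e: "ed k m h = ed k m' h'"
  shows "m = m' \<and> h = h'"
proof -
  have k1: "1 \<le> k" using m by simp
  obtain t where o: "h = 2*t+2" "t < k" using hX by blast
  have r: "ed k m h = {m+t, 2*k+3*m+t}" using o ed2 by simp
  obtain t' where op: "h' = 2*t'+2" "t' < k" using hY by blast
  have rp: "ed k m' h' = {m'+t', 2*k+3*m'+t'}" using op ed2 by simp
  have "{m+t, 2*k+3*m+t} = {m'+t', 2*k+3*m'+t'}" using e r rp by simp
  from ec22[OF m o(2) op(2) this] show ?thesis using o op by simp
qed

lemma edc23:
  assumes m: "1 \<le> m" "m \<le> k" "1 \<le> m'" "m' \<le> k" and hX: "\<exists>t. h = 2*t+2 \<and> t < k" and hY: "\<exists>t'. h' = 2*t'+3 \<and> t'+1 < k"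
    and e: "ed k m h = ed k m' h'"
  shows "m = m' \<and> h = h'"
proof -
  have k1: "1 \<le> k" using m by simp
  obtain t where o: "h = 2*t+2" "t < k" using hX by blast
  have r: "ed k m h = {m+t, 2*k+3*m+t}" using o ed2 by simp
  obtain t' where op: "h' = 2*t'+3" "t'+1 < k" using hY by blast
  have rp: "ed k m' h' = {2*k+3*m'+t', m'+t'+1}" using op ed3 by simp
  have "{m+t, 2*k+3*m+t} = {2*k+3*m'+t', m'+t'+1}" using e r rp by simp
  from ec23[OF m o(2) op(2) this] show ?thesis by simp
qed

lemma edc24:
  assumes m: "1 \<le> m" "m \<le> k" "1 \<le> m'" "m' \<le> k" and hX: "\<exists>t. h = 2*t+2 \<and> t < k" and hY: "h' = 2*k+1"
    and e: "ed k m h = ed k m' h'"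
  shows "m = m' \<and> h = h'"
proof -
  have k1: "1 \<le> k" using m by simp
  obtain t where o: "h = 2*t+2" "t < k" using hX by blast
  have r: "ed k m h = {m+t, 2*k+3*m+t}" using o ed2 by simp
  have rp: "ed k m' h' = {2*k+3*m'+k-1, 6*k+m'}" using hY ed4[OF k1] by simp
  have "{m+t, 2*k+3*m+t} = {2*k+3*m'+k-1, 6*k+m'}" using e r rp by simp
  from ec24[OF m o(2) k1 this] show ?thesis by simp
qed

lemma edc31:
  assumes m: "1 \<le> m" "m \<le> k" "1 \<le> m'" "m' \<le> k" and hX: "\<exists>t. h = 2*t+3 \<and> t+1 < k" and hY: "h' = 1"
    and e: "ed k m h = ed k m' h'"
  shows "m = m' \<and> h = h'"
proof -
  have k1: "1 \<le> k" using m by simp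
  obtain t where o: "h = 2*t+3" "t+1 < k" using hX by blast
  have r: "ed k m h = {2*k+3*m+t, m+t+1}" using o ed3 by simp
  have rp: "ed k m' h' = {0, m'}" using hY ed1[OF k1] by simp
  have "{2*k+3*m+t, m+t+1} = {0, m'}" using e r rp by simp
  from ec31[OF m o(2) k1 this] show ?thesis by simp
qed

lemma edc32:
  assumes m: "1 \<le> m" "m \<le> k" "1 \<le> m'" "m' \<le> k" and hX: "\<exists>t. h = 2*t+3 \<and> t+1 < k" and hY: "\<exists>t'. h' = 2*t'+2 \<and> t' < k"
    and e: "ed k m h = ed k m' h'"
  shows "m = m' \<and> h = h'"
proof -
  have k1: "1 \<le> k" using m by simp
  obtain t where o: "h = 2*t+3" "t+1 < k" using hX by blast
  have r: "ed k m h = {2*k+3*m+t, m+t+1}" using o ed3 by simp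
  obtain t' where op: "h' = 2*t'+2" "t' < k" using hY by blast
  have rp: "ed k m' h' = {m'+t', 2*k+3*m'+t'}" using op ed2 by simp
  have "{2*k+3*m+t, m+t+1} = {m'+t', 2*k+3*m'+t'}" using e r rp by simp
  from ec32[OF m o(2) op(2) this] show ?thesis by simp
qed

lemma edc33:
  assumes m: "1 \<le> m" "m \<le> k" "1 \<le> m'" "m' \<le> k" and hX: "\<exists>t. h = 2*t+3 \<and> t+1 < k" and hY: "\<exists>t'. h' = 2*t'+3 \<and> t'+1 < k"
    and e: "ed k m h = ed k m' h'"
  shows "m = m' \<and> h = h'"
proof -
  have k1: "1 \<le> k" using m by simp
  obtain t where o: "h = 2*t+3" "t+1 < k" using hX by blast
  have r: "ed k m h = {2*k+3*m+t, m+t+1}" using o ed3 by simp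
  obtain t' where op: "h' = 2*t'+3" "t'+1 < k" using hY by blast
  have rp: "ed k m' h' = {2*k+3*m'+t', m'+t'+1}" using op ed3 by simp
  have "{2*k+3*m+t, m+t+1} = {2*k+3*m'+t', m'+t'+1}" using e r rp by simp
  from ec33[OF m o(2) op(2) this] show ?thesis using o op by simp
qed

lemma edc34:
  assumes m: "1 \<le> m" "m \<le> k" "1 \<le> m'" "m' \<le> k" and hX: "\<exists>t. h = 2*t+3 \<and> t+1 < k" and hY: "h' = 2*k+1"
    and e: "ed k m h = ed k m' h'"
  shows "m = m' \<and> h = h'"
proof -
  have k1: "1 \<le> k" using m by simp
  obtain t where o: "h = 2*t+3" "t+1 < k" using hX by blast
  have r: "ed k m h = {2*k+3*m+t, m+t+1}" using o ed3 by simp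
  have rp: "ed k m' h' = {2*k+3*m'+k-1, 6*k+m'}" using hY ed4[OF k1] by simp
  have "{2*k+3*m+t, m+t+1} = {2*k+3*m'+k-1, 6*k+m'}" using e r rp by simp
  from ec34[OF m o(2) k1 this] show ?thesis by simp
qed

lemma edc41:
  assumes m: "1 \<le> m" "m \<le> k" "1 \<le> m'" "m' \<le> k" and hX: "h = 2*k+1" and hY: "h' = 1"
    and e: "ed k m h = ed k m' h'"
  shows "m = m' \<and> h = h'"
proof -
  have k1: "1 \<le> k" using m by simp
  have r: "ed k m h = {2*k+3*m+k-1, 6*k+m}" using hX ed4[OF k1] by simp
  have rp: "ed k m' h' = {0, m'}" using hY ed1[OF k1] by simp
  have "{2*k+3*m+k-1, 6*k+m} = {0, m'}" using e r rp by simp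
  from ec41[OF m k1 k1 this] show ?thesis by simp
qed

lemma edc42:
  assumes m: "1 \<le> m" "m \<le> k" "1 \<le> m'" "m' \<le> k" and hX: "h = 2*k+1" and hY: "\<exists>t'. h' = 2*t'+2 \<and> t' < k"
    and e: "ed k m h = ed k m' h'"
  shows "m = m' \<and> h = h'"
proof -
  have k1: "1 \<le> k" using m by simp
  have r: "ed k m h = {2*k+3*m+k-1, 6*k+m}" using hX ed4[OF k1] by simp
  obtain t' where op: "h' = 2*t'+2" "t' < k" using hY by blast
  have rp: "ed k m' h' = {m'+t', 2*k+3*m'+t'}" using op ed2 by simp
  have "{2*k+3*m+k-1, 6*k+m} = {m'+t', 2*k+3*m'+t'}" using e r rp by simp
  from ec42[OF m k1 op(2) this] show ?thesis by simp
qed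

lemma edc43:
  assumes m: "1 \<le> m" "m \<le> k" "1 \<le> m'" "m' \<le> k" and hX: "h = 2*k+1" and hY: "\<exists>t'. h' = 2*t'+3 \<and> t'+1 < k"
    and e: "ed k m h = ed k m' h'"
  shows "m = m' \<and> h = h'"
proof -
  have k1: "1 \<le> k" using m by simp
  have r: "ed k m h = {2*k+3*m+k-1, 6*k+m}" using hX ed4[OF k1] by simp
  obtain t' where op: "h' = 2*t'+3" "t'+1 < k" using hY by blast
  have rp: "ed k m' h' = {2*k+3*m'+t', m'+t'+1}" using op ed3 by simp
  have "{2*k+3*m+k-1, 6*k+m} = {2*k+3*m'+t', m'+t'+1}" using e r rp by simp
  from ec43[OF m k1 op(2) this] show ?thesis by simp
qed

lemma edc44:
  assumes m: "1 \<le> m" "m \<le> k" "1 \<le> m'" "m' \<le> k" and hX: "h = 2*k+1" and hY: "h' = 2*k+1"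
    and e: "ed k m h = ed k m' h'"
  shows "m = m' \<and> h = h'"
proof -
  have k1: "1 \<le> k" using m by simp
  have r: "ed k m h = {2*k+3*m+k-1, 6*k+m}" using hX ed4[OF k1] by simp
  have rp: "ed k m' h' = {2*k+3*m'+k-1, 6*k+m'}" using hY ed4[OF k1] by simp
  have "{2*k+3*m+k-1, 6*k+m} = {2*k+3*m'+k-1, 6*k+m'}" using e r rp by simp
  from ec44[OF m k1 k1 this] show ?thesis using hX hY by simp
qed

lemma ed_inj: "1 \<le> m \<Longrightarrow> m \<le> k \<Longrightarrow> 1 \<le> h \<Longrightarrow> h \<le> 2*k+1 \<Longrightarrow> 1 \<le> m' \<Longrightarrow> m' \<le> k \<Longrightarrow> 1 \<le> h' \<Longrightarrow> h' \<le> 2*k+1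
  \<Longrightarrow> ed k m h = ed k m' h' \<Longrightarrow> m = m' \<and> h = h'"
proof -
  assume a: "1 \<le> m" "m \<le> k" "1 \<le> h" "h \<le> 2*k+1" "1 \<le> m'" "m' \<le> k" "1 \<le> h'" "h' \<le> 2*k+1" "ed k m h = ed k m' h'"
  have c1: "h = 1 \<or> h = 2*k+1 \<or> (\<exists>t. h = 2*t+2 \<and> t < k) \<or> (\<exists>t. h = 2*t+3 \<and> t+1 < k)" using ed_cases a by blast
  have c2: "h' = 1 \<or> h' = 2*k+1 \<or> (\<exists>t. h' = 2*t+2 \<and> t < k) \<or> (\<exists>t. h' = 2*t+3 \<and> t+1 < k)" using ed_cases a by blast
  from c1 show ?thesis
  proof (elim disjE)
    assume X: "h = 1"
    from c2 show ?thesis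
    proof (elim disjE)
      assume Y: "h' = 1"
      show ?thesis by (rule edc11[OF a(1,2,5,6) X Y a(9)])
    next
      assume Y: "h' = 2*k+1"
      show ?thesis by (rule edc14[OF a(1,2,5,6) X Y a(9)])
    next
      assume Y: "\<exists>t. h' = 2*t+2 \<and> t < k"
      show ?thesis by (rule edc12[OF a(1,2,5,6) X Y a(9)])
    next
      assume Y: "\<exists>t. h' = 2*t+3 \<and> t+1 < k"
      show ?thesis by (rule edc13[OF a(1,2,5,6) X Y a(9)])
    qed
  next
    assume X: "h = 2*k+1"
    from c2 show ?thesis
    proof (elim disjE)
      assume Y: "h' = 1"
      show ?thesis by (rule edc41[OF a(1,2,5,6) X Y a(9)])
    next
      assume Y: "h' = 2*k+1"
      show ?thesis by (rule edc44[OF a(1,2,5,6) X Y a(9)])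
    next
      assume Y: "\<exists>t. h' = 2*t+2 \<and> t < k"
      show ?thesis by (rule edc42[OF a(1,2,5,6) X Y a(9)])
    next
      assume Y: "\<exists>t. h' = 2*t+3 \<and> t+1 < k"
      show ?thesis by (rule edc43[OF a(1,2,5,6) X Y a(9)])
    qed
  next
    assume X: "\<exists>t. h = 2*t+2 \<and> t < k"
    from c2 show ?thesis
    proof (elim disjE)
      assume Y: "h' = 1"
      show ?thesis by (rule edc21[OF a(1,2,5,6) X Y a(9)])
    next
      assume Y: "h' = 2*k+1"
      show ?thesis by (rule edc24[OF a(1,2,5,6) X Y a(9)])
    next
      assume Y: "\<exists>t. h' = 2*t+2 \<and> t < k"
      show ?thesis by (rule edc22[OF a(1,2,5,6) X Y a(9)])
    next
      assume Y: "\<exists>t. h' = 2*t+3 \<and> t+1 < k"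
      show ?thesis by (rule edc23[OF a(1,2,5,6) X Y a(9)])
    qed
  next
    assume X: "\<exists>t. h = 2*t+3 \<and> t+1 < k"
    from c2 show ?thesis
    proof (elim disjE)
      assume Y: "h' = 1"
      show ?thesis by (rule edc31[OF a(1,2,5,6) X Y a(9)])
    next
      assume Y: "h' = 2*k+1"
      show ?thesis by (rule edc34[OF a(1,2,5,6) X Y a(9)])
    next
      assume Y: "\<exists>t. h' = 2*t+2 \<and> t < k"
      show ?thesis by (rule edc32[OF a(1,2,5,6) X Y a(9)])
    next
      assume Y: "\<exists>t. h' = 2*t+3 \<and> t+1 < k"
      show ?thesis by (rule edc33[OF a(1,2,5,6) X Y a(9)])
    qed
  qed
qed

definition lb :: "nat \<Rightarrow> nat set \<Rightarrow> nat" where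
"lb k e = (SOME x. \<exists>m h. 1 \<le> m \<and> m \<le> k \<and> 1 \<le> h \<and> h \<le> 2*k+1 \<and> e = ed k m h \<and> x = m*(4*k)+h)"

definition Ed :: "nat \<Rightarrow> nat set set" where
"Ed k = {ed k m h | m h. 1 \<le> m \<and> m \<le> k \<and> 1 \<le> h \<and> h \<le> 2*k+1}"

lemma lb_ed:
  assumes "1 \<le> m" "m \<le> k" "1 \<le> h" "h \<le> 2*k+1"
  shows "lb k (ed k m h) = m*(4*k)+h"
  unfolding lb_def
proof (rule someI2)
  show "\<exists>m' h'. 1 \<le> m' \<and> m' \<le> k \<and> 1 \<le> h' \<and> h' \<le> 2*k+1 \<and> ed k m h = ed k m' h' \<and> m*(4*k)+h = m'*(4*k)+h'"
    using assms by blast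
next
  fix x assume "\<exists>m' h'. 1 \<le> m' \<and> m' \<le> k \<and> 1 \<le> h' \<and> h' \<le> 2*k+1 \<and> ed k m h = ed k m' h' \<and> x = m'*(4*k)+h'"
  then obtain m' h' where "1 \<le> m'" "m' \<le> k" "1 \<le> h'" "h' \<le> 2*k+1" "ed k m h = ed k m' h'" "x = m'*(4*k)+h'" by blast
  note h = this
  have "m = m' \<and> h = h'" using ed_inj[OF assms h(1-5)] .
  then show "x = m*(4*k)+h" using h(6) by simp
qed

lemma lab_order:
  assumes "h \<le> 2*k+1" "1 \<le> h'" "1 \<le> k" "h' \<le> 2*k+1" "m*(4*k)+h \<le> m'*(4*k)+(h'::nat)"
  shows "m < m' \<or> (m = m' \<and> h \<le> h')"
proof (rule ccontr)
  assume "\<not> ?thesis"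
  then have "m' < m \<or> (m = m' \<and> h' < h)" by auto
  then show False
  proof
    assume "m' < m"
    then have "m'*(4*k) + 4*k \<le> m*(4*k)"
      by (metis Suc_leI add.commute mult_Suc mult_le_mono1)
    then show False using assms by linarith
  next
    assume a: "m = m' \<and> h' < h"
    then have "m*(4*k)+h \<le> m*(4*k)+h'" using assms(5) by simp
    then have "h \<le> h'" by (rule add_le_imp_le_left)
    then show False using a by simp
  qed
qed

lemma sg0: "sg k m 0 = 0" unfolding sg_def by simp

lemma sg_zero_iff: "1 \<le> m \<Longrightarrow> m \<le> k \<Longrightarrow> h \<le> 2*k+1 \<Longrightarrow> sg k m h = 0 \<Longrightarrow> h = 0"
proof -
  assume a: "1 \<le> m" "m \<le> k" "h \<le> 2*k+1" "sg k m h = 0"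
  have e: "sg k m h = sg k m 0" using a(4) by (simp only: sg0)
  have z: "(0::nat) \<le> 2*k+1" by simp
  show "h = 0" by (rule sg_inj[OF a(1-3) z e])
qed

lemma main:
  assumes tp: "temporal_path V (Ed k) (lb k) p" and hd0: "p!0 = 0"
  shows "1 \<le> j \<Longrightarrow> j < length p \<Longrightarrow> \<exists>m h. 1 \<le> m \<and> m \<le> k \<and> 1 \<le> h \<and> h \<le> 2*k+1 \<and>
     {p!(j-1), p!j} = ed k m h \<and>
     ((p!j = sg k m h \<and> h \<le> j \<and> (j = h \<longrightarrow> (\<forall>i\<le>j. p!i = sg k m i))) \<or> (p!j = sg k m (h-1) \<and> h+1 \<le> j))"
proof (induction j)
  case 0 then show ?case by simp
next
  case (Suc j)
  have dist: "distinct p" and edges: "\<And>i. Suc i < length p \<Longrightarrow> {p ! i, p ! Suc i} \<in> Ed k"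
    and labs: "\<And>i. Suc (Suc i) < length p \<Longrightarrow> lb k {p ! i, p ! Suc i} \<le> lb k {p ! Suc i, p ! Suc (Suc i)}"
    using tp unfolding temporal_path_def by auto
  have neq: "\<And>a b. a < length p \<Longrightarrow> b < length p \<Longrightarrow> a \<noteq> b \<Longrightarrow> p!a \<noteq> p!b"
    using dist by (simp add: nth_eq_iff_index_eq)
  obtain m' h' where v': "1 \<le> m'" "m' \<le> k" "1 \<le> h'" "h' \<le> 2*k+1" and e': "{p!j, p!Suc j} = ed k m' h'"
    using edges[of j] Suc.prems unfolding Ed_def by auto
  have e'': "(p!j = sg k m' (h'-1) \<and> p!Suc j = sg k m' h') \<or> (p!j = sg k m' h' \<and> p!Suc j = sg k m' (h'-1))"
    using e' unfolding ed_def doubleton_eq_iff by auto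
  show ?case
  proof (cases "j = 0")
    case True
    then have "p!j = 0" using hd0 by simp
    note pj0 = this
    have "h' = 1 \<and> p!Suc j = sg k m' h'"
    proof (rule disjE[OF e''])
      assume c: "p!j = sg k m' (h'-1) \<and> p!Suc j = sg k m' h'"
      then have "sg k m' (h'-1) = 0" using pj0 by simp
      then have "h'-1 = 0" using sg_zero_iff[of m' k "h'-1"] v' by linarith
      then show ?thesis using c v' by simp
    next
      assume c: "p!j = sg k m' h' \<and> p!Suc j = sg k m' (h'-1)"
      then have "sg k m' h' = 0" using pj0 by simp
      then have "h' = 0" using sg_zero_iff[of m' k h'] v' by linarith
      then show ?thesis using v' by simp
    qed
    then show ?thesis using v' e' True hd0 sg0
      by (intro exI[of _ m'] exI[of _ h']) (auto simp: le_Suc_eq)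
  next
    case False
    then obtain m h where v: "1 \<le> m" "m \<le> k" "1 \<le> h" "h \<le> 2*k+1" and e: "{p!(j-1), p!j} = ed k m h"
      and br: "(p!j = sg k m h \<and> h \<le> j \<and> (j = h \<longrightarrow> (\<forall>i\<le>j. p!i = sg k m i))) \<or> (p!j = sg k m (h-1) \<and> h+1 \<le> j)"
      using Suc.IH Suc.prems by auto
    have "lb k {p ! (j-1), p ! Suc (j-1)} \<le> lb k {p ! Suc (j-1), p ! Suc (Suc (j-1))}"
      using labs[of "j-1"] Suc.prems False by simp
    then have "lb k {p ! (j-1), p ! j} \<le> lb k {p ! j, p ! Suc j}" using False by simp
    then have "m*(4*k)+h \<le> m'*(4*k)+h'" using e e' lb_ed v v' by simp
    then have ord: "m < m' \<or> (m = m' \<and> h \<le> h')" using lab_order[of h k h' m m'] v v' by linarith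
    have lp: "0 < length p" "j < length p" using Suc.prems by auto
    have "p!j \<noteq> p!0" using neq[OF lp(2) lp(1) False] .
    then have nz: "p!j \<noteq> 0" using hd0 by simp
    have nzj: "p!Suc j \<noteq> p!j" using neq[of "Suc j" j] Suc.prems by simp
    have nzj1: "p!Suc j \<noteq> p!(j-1)" using neq[of "Suc j" "j-1"] Suc.prems by simp
    from ord show ?thesis
    proof
      assume mm: "m < m'"
      obtain g where g: "p!j = sg k m g" "g \<le> j" "g \<le> 2*k+1" using br v by auto
      obtain g' where g': "p!j = sg k m' g'" "g' \<le> 2*k+1" "g' = h' \<or> g' = h'-1" using e'' v' by auto
      have gg0: "sg k m g = sg k m' g'" using g(1) g'(1) by simp
      have "g' < g \<or> (g = 0 \<and> g' = 0)" by (rule sg_mono[OF v(1) mm v'(2) g(3) g'(2) gg0])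
      moreover have "g \<noteq> 0"
      proof
        assume "g = 0"
        then have "p!j = 0" using g(1) sg0 by simp
        then show False using nz by simp
      qed
      ultimately have gg: "g' < g" by simp
      have hl': "h'-1 \<le> 2*k+1" using v' by simp
      have neqh: "sg k m' (h'-1) \<noteq> sg k m' h'"
      proof
        assume "sg k m' (h'-1) = sg k m' h'"
        then have "h'-1 = h'" using sg_inj[OF v'(1,2) hl' v'(4)] by blast
        then show False using v'(3) by simp
      qed
      from e'' show ?thesis
      proof
        assume c: "p!j = sg k m' (h'-1) \<and> p!Suc j = sg k m' h'"
        then have "g' = h'-1" using g'(1,3) neqh by auto
        then have hj: "h' \<le> j" using gg g(2) v'(3) by linarith
        have ee: "{p!(Suc j - 1), p!Suc j} = ed k m' h'" using e' by simp
        have br1: "p!Suc j = sg k m' h' \<and> h' \<le> Suc j \<and> (Suc j = h' \<longrightarrow> (\<forall>i\<le>Suc j. p!i = sg k m' i))"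
          using c hj by simp
        show ?thesis
          by (rule exI[of _ m'], rule exI[of _ h']) (use v' ee br1 in blast)
      next
        assume c: "p!j = sg k m' h' \<and> p!Suc j = sg k m' (h'-1)"
        then have "g' = h'" using g'(1,3) neqh by auto
        then have hj: "h' + 1 \<le> Suc j" using gg g(2) by linarith
        have ee: "{p!(Suc j - 1), p!Suc j} = ed k m' h'" using e' by simp
        have br2: "p!Suc j = sg k m' (h'-1) \<and> h'+1 \<le> Suc j" using c hj by simp
        show ?thesis
          by (rule exI[of _ m'], rule exI[of _ h']) (use v' ee br2 in blast)
      qed
    next
      assume mm: "m = m' \<and> h \<le> h'"
      show ?thesis
      proof (cases "h = h'")
        case True
        then have "{p!(j-1), p!j} = {p!j, p!Suc j}" using e e' mm by simp
        then show ?thesis using nzj nzj1 unfolding doubleton_eq_iff by auto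
      next
        case False
        then have hl: "h < h'" using mm by simp
        have y1: "p!j = sg k m h" and hh: "h' = h + 1"
        proof -
          have A: "\<And>a b. a \<le> 2*k+1 \<Longrightarrow> b \<le> 2*k+1 \<Longrightarrow> sg k m a = sg k m b \<Longrightarrow> a = b"
            using sg_inj[of m k] v by blast
          have e3: "(p!j = sg k m (h'-1) \<and> p!Suc j = sg k m h') \<or> (p!j = sg k m h' \<and> p!Suc j = sg k m (h'-1))"
            using e'' mm by simp
          have yb: "p!j = sg k m h \<or> p!j = sg k m (h-1)"
          proof (rule disjE[OF br])
            assume "p!j = sg k m h \<and> h \<le> j \<and> (j = h \<longrightarrow> (\<forall>i\<le>j. p!i = sg k m i))"
            then have "p!j = sg k m h" by (rule conjunct1)
            then show ?thesis by (rule disjI1)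
          next
            assume "p!j = sg k m (h-1) \<and> h+1 \<le> j"
            then have "p!j = sg k m (h-1)" by (rule conjunct1)
            then show ?thesis by (rule disjI2)
          qed
          have b1: "h \<le> 2*k+1" "h-1 \<le> 2*k+1" "h' \<le> 2*k+1" "h'-1 \<le> 2*k+1" using v v' by simp_all
          have nh': "p!j \<noteq> sg k m h'"
          proof (rule notI)
            assume q: "p!j = sg k m h'"
            from yb show False
            proof
              assume "p!j = sg k m h"
              then have "sg k m h = sg k m h'" using q by simp
              then have "h = h'" by (rule A[OF b1(1) b1(3)])
              then show False using hl by simp
            next
              assume "p!j = sg k m (h-1)"
              then have "sg k m (h-1) = sg k m h'" using q by simp
              then have "h-1 = h'" by (rule A[OF b1(2) b1(3)])
              then show False using hl by simp
            qed
          qed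
          then have q2: "p!j = sg k m (h'-1)" using e3 by blast
          from yb have "h = h'-1"
          proof
            assume "p!j = sg k m h"
            then have "sg k m h = sg k m (h'-1)" using q2 by simp
            then show "h = h'-1" by (rule A[OF b1(1) b1(4)])
          next
            assume "p!j = sg k m (h-1)"
            then have "sg k m (h-1) = sg k m (h'-1)" using q2 by simp
            then have "h-1 = h'-1" by (rule A[OF b1(2) b1(4)])
            then show "h = h'-1" using hl v(3) by simp
          qed
          then show "h' = h + 1" using hl by simp
          show "p!j = sg k m h" using q2 \<open>h = h'-1\<close> by simp
        qed
        have nq: "sg k m h \<noteq> sg k m (h+1)"
        proof (rule notI)
          assume "sg k m h = sg k m (h+1)"
          moreover have "h+1 \<le> 2*k+1" using v' hh by simp
          ultimately have "h = h+1" using sg_inj[OF v(1,2,4)] by blast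
          then show False by simp
        qed
        have z: "p!Suc j = sg k m' h'"
          using e'' y1 hh mm nq by auto
        have nq2: "sg k m h \<noteq> sg k m (h-1)"
        proof (rule notI)
          assume "sg k m h = sg k m (h-1)"
          moreover have "h-1 \<le> 2*k+1" using v by simp
          ultimately have "h = h-1" using sg_inj[OF v(1,2,4)] by blast
          then show False using v(3) by simp
        qed
        have br1: "p!j = sg k m h \<and> h \<le> j \<and> (j = h \<longrightarrow> (\<forall>i\<le>j. p!i = sg k m i))"
          using br y1 nq2 by auto
        have hj: "h \<le> j" using br1 by simp
        have pre: "Suc j = h' \<Longrightarrow> \<forall>i\<le>Suc j. p!i = sg k m' i"
        proof -
          assume "Suc j = h'"
          then have "j = h" using hh by simp
          then have "\<forall>i\<le>j. p!i = sg k m i" using br1 by simp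
          then show ?thesis using z mm \<open>Suc j = h'\<close> by (auto simp: le_Suc_eq)
        qed
        have ee: "{p!(Suc j - 1), p!Suc j} = ed k m' h'" using e' by simp
        have br3: "p!Suc j = sg k m' h' \<and> h' \<le> Suc j \<and> (Suc j = h' \<longrightarrow> (\<forall>i\<le>Suc j. p!i = sg k m' i))"
          using z hh hj pre by simp
        show ?thesis
          by (rule exI[of _ m'], rule exI[of _ h']) (use v' ee br3 in blast)
      qed
    qed
  qed
qed


lemma temporal_path_mono: "temporal_path V H lam p \<Longrightarrow> H \<subseteq> E \<Longrightarrow> temporal_path V E lam p"
  unfolding temporal_path_def by blast

lemma ed_in_Ed: "1 \<le> m \<Longrightarrow> m \<le> k \<Longrightarrow> 1 \<le> h \<Longrightarrow> h \<le> 2*k+1 \<Longrightarrow> ed k m h \<in> Ed k"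
  unfolding Ed_def by blast

lemma nth_P: "i < 2*k+2 \<Longrightarrow> map (sg k m) [0..<2*k+2] ! i = sg k m i"
  by (simp del: upt_Suc)

lemma Pm_path:
  assumes m: "1 \<le> m" "m \<le> k" and V: "{0..7*k} \<subseteq> V"
  shows "temporal_path V (Ed k) (lb k) (map (sg k m) [0..<2*k+2])"
proof -
  have inj: "inj_on (sg k m) (set [0..<2*k+2])"
  proof (rule inj_onI)
    fix x y assume "x \<in> set [0..<2*k+2]" "y \<in> set [0..<2*k+2]" and "sg k m x = sg k m y"
    moreover have "x \<le> 2*k+1" "y \<le> 2*k+1" using calculation by auto
    ultimately show "x = y" using sg_inj[OF m] by blast
  qed
  have "set (map (sg k m) [0..<2*k+2]) \<subseteq> V"
    using sg_range[of m k] m V by fastforce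
  moreover have "\<forall>i. Suc i < length (map (sg k m) [0..<2*k+2]) \<longrightarrow>
      {map (sg k m) [0..<2*k+2] ! i, map (sg k m) [0..<2*k+2] ! Suc i} \<in> Ed k"
  proof (intro allI impI)
    fix i assume "Suc i < length (map (sg k m) [0..<2*k+2])"
    then have i: "Suc i \<le> 2*k+1" by simp
    have i1: "i < 2*k+2" "Suc i < 2*k+2" using i by arith+
    have "{map (sg k m) [0..<2*k+2] ! i, map (sg k m) [0..<2*k+2] ! Suc i} = ed k m (Suc i)"
      unfolding ed_def by (simp only: nth_P[OF i1(1)] nth_P[OF i1(2)] diff_Suc_1)
    then show "{map (sg k m) [0..<2*k+2] ! i, map (sg k m) [0..<2*k+2] ! Suc i} \<in> Ed k"
      using ed_in_Ed[of m k "Suc i"] m i by simp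
  qed
  moreover have "\<forall>i. Suc (Suc i) < length (map (sg k m) [0..<2*k+2]) \<longrightarrow>
      lb k {map (sg k m) [0..<2*k+2] ! i, map (sg k m) [0..<2*k+2] ! Suc i}
      \<le> lb k {map (sg k m) [0..<2*k+2] ! Suc i, map (sg k m) [0..<2*k+2] ! Suc (Suc i)}"
  proof (intro allI impI)
    fix i assume "Suc (Suc i) < length (map (sg k m) [0..<2*k+2])"
    then have i: "Suc (Suc i) \<le> 2*k+1" by simp
    have i1: "i < 2*k+2" "Suc i < 2*k+2" "Suc (Suc i) < 2*k+2" using i by arith+
    have e1: "{map (sg k m) [0..<2*k+2] ! i, map (sg k m) [0..<2*k+2] ! Suc i} = ed k m (Suc i)"
      unfolding ed_def by (simp only: nth_P[OF i1(1)] nth_P[OF i1(2)] diff_Suc_1)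
    have e2: "{map (sg k m) [0..<2*k+2] ! Suc i, map (sg k m) [0..<2*k+2] ! Suc (Suc i)} = ed k m (Suc (Suc i))"
      unfolding ed_def by (simp only: nth_P[OF i1(2)] nth_P[OF i1(3)] diff_Suc_1)
    show "lb k {map (sg k m) [0..<2*k+2] ! i, map (sg k m) [0..<2*k+2] ! Suc i}
      \<le> lb k {map (sg k m) [0..<2*k+2] ! Suc i, map (sg k m) [0..<2*k+2] ! Suc (Suc i)}"
      unfolding e1 e2 using lb_ed[of m k "Suc i"] lb_ed[of m k "Suc (Suc i)"] m i by simp
  qed
  ultimately show ?thesis unfolding temporal_path_def using inj
    by (simp add: distinct_map del: upt_Suc)
qed

lemma tgt_path:
  assumes m: "1 \<le> m" "m \<le> k" and tp: "temporal_path V (Ed k) (lb k) p"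
    and hd: "hd p = 0" and lst: "last p = sg k m (2*k+1)"
  shows "2*k+1 \<le> length p - 1 \<and> (length p - 1 = 2*k+1 \<longrightarrow> (\<forall>i\<le>2*k+1. p!i = sg k m i))"
proof -
  have ne: "p \<noteq> []" using tp unfolding temporal_path_def by simp
  have p0: "p!0 = 0" using hd ne by (simp add: hd_conv_nth)
  have tnz: "sg k m (2*k+1) \<noteq> 0" using m unfolding sg_def by simp
  have len: "2 \<le> length p"
  proof (rule ccontr)
    assume "\<not> 2 \<le> length p"
    moreover have "length p \<noteq> 0" using ne by simp
    ultimately have "length p = 1" by linarith
    then obtain x where "p = [x]" by (metis One_nat_def length_0_conv length_Suc_conv)
    then have "hd p = last p" by simp
    then show False using hd lst tnz by simp
  qed
  define j where "j = length p - 1"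
  have j: "1 \<le> j" "j < length p" using len unfolding j_def by auto
  have pj: "p!j = sg k m (2*k+1)" using lst ne unfolding j_def by (simp add: last_conv_nth)
  obtain m' h where v: "1 \<le> m'" "m' \<le> k" "1 \<le> h" "h \<le> 2*k+1"
    and br: "(p!j = sg k m' h \<and> h \<le> j \<and> (j = h \<longrightarrow> (\<forall>i\<le>j. p!i = sg k m' i))) \<or> (p!j = sg k m' (h-1) \<and> h+1 \<le> j)"
    using main[OF tp p0 j] by blast
  from br show ?thesis
  proof
    assume c: "p!j = sg k m' h \<and> h \<le> j \<and> (j = h \<longrightarrow> (\<forall>i\<le>j. p!i = sg k m' i))"
    then have q: "sg k m' h = sg k m (2*k+1)" using pj by simp
    have "m' = m" by (rule sg_tgt[OF m v(1,2,4) q])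
    then have q2: "sg k m h = sg k m (2*k+1)" using q by simp
    have "h = 2*k+1" using sg_inj[OF m v(4) _ q2] by simp
    then show ?thesis using c \<open>m' = m\<close> unfolding j_def by auto
  next
    assume c: "p!j = sg k m' (h-1) \<and> h+1 \<le> j"
    then have q: "sg k m' (h-1) = sg k m (2*k+1)" using pj by simp
    have hl: "h-1 \<le> 2*k+1" using v by simp
    have "m' = m" by (rule sg_tgt[OF m v(1,2) hl q])
    then have q2: "sg k m (h-1) = sg k m (2*k+1)" using q by simp
    have "h - 1 = 2*k+1" using sg_inj[OF m hl _ q2] by simp
    then show ?thesis using v by simp
  qed
qed

lemma dist_tgt:
  assumes m: "1 \<le> m" "m \<le> k" and V: "{0..7*k} \<subseteq> V"
  shows "temporal_dist V (Ed k) (lb k) 0 (sg k m (2*k+1)) = enat (2*k+1)"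
proof -
  let ?S = "{enat (length p - 1) | p. temporal_path V (Ed k) (lb k) p \<and> hd p = 0 \<and> last p = sg k m (2*k+1)}"
  have "enat (2*k+1) \<in> ?S"
  proof -
    let ?p = "map (sg k m) [0..<2*k+2]"
    have A: "temporal_path V (Ed k) (lb k) ?p" using Pm_path[OF m V] .
    have B: "hd ?p = 0" by (simp add: hd_map sg0 del: upt_Suc)
    have C: "last ?p = sg k m (2*k+1)" by (simp add: last_map del: upt_Suc)
    have D: "length ?p - 1 = 2*k+1" by simp
    have E: "enat (2*k+1) = enat (length ?p - 1)" by (simp only: D)
    show ?thesis unfolding mem_Collect_eq by (rule exI[of _ ?p]) (intro conjI E A B C)
  qed
  moreover have "\<forall>x\<in>?S. enat (2*k+1) \<le> x"
  proof
    fix x assume "x \<in> ?S"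
    then obtain p where p: "x = enat (length p - 1)" "temporal_path V (Ed k) (lb k) p" "hd p = 0" "last p = sg k m (2*k+1)"
      by blast
    have "2*k+1 \<le> length p - 1" using tgt_path[OF m p(2-4)] by (rule conjunct1)
    then show "enat (2*k+1) \<le> x" using p(1) by simp
  qed
  ultimately have "Inf ?S = enat (2*k+1)"
    by (meson Inf_greatest Inf_lower order_antisym)
  then show ?thesis unfolding temporal_dist_def .
qed

lemma pres_contains:
  assumes m: "1 \<le> m" "m \<le> k" and V: "{0..7*k} \<subseteq> V" and sub: "H \<subseteq> Ed k"
    and eq: "temporal_dist V H (lb k) 0 (sg k m (2*k+1)) = temporal_dist V (Ed k) (lb k) 0 (sg k m (2*k+1))"
    and h: "1 \<le> h" "h \<le> 2*k+1"
  shows "ed k m h \<in> H"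
proof -
  let ?S = "{enat (length p - 1) | p. temporal_path V H (lb k) p \<and> hd p = 0 \<and> last p = sg k m (2*k+1)}"
  have "Inf ?S = enat (2*k+1)" using eq dist_tgt[OF m V] unfolding temporal_dist_def by simp
  then have ne: "?S \<noteq> {}"
    by (metis Inf_empty enat.distinct(1) top_enat_def)
  then obtain x where x: "x \<in> ?S" by blast
  have "(LEAST y. y \<in> ?S) \<in> ?S" using x by (rule LeastI)
  then have "Inf ?S \<in> ?S" by (simp only: Inf_enat_def if_not_P[OF ne])
  then obtain p where p: "temporal_path V H (lb k) p" "hd p = 0" "last p = sg k m (2*k+1)"
    "enat (length p - 1) = enat (2*k+1)"
    using \<open>Inf ?S = enat (2*k+1)\<close> by auto
  have tpE: "temporal_path V (Ed k) (lb k) p" using temporal_path_mono[OF p(1) sub] .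
  have L: "length p - 1 = 2*k+1" using p(4) by simp
  have pi: "\<forall>i\<le>2*k+1. p!i = sg k m i" using tgt_path[OF m tpE p(2) p(3)] L by simp
  have edH: "\<forall>i. Suc i < length p \<longrightarrow> {p ! i, p ! Suc i} \<in> H" using p(1) unfolding temporal_path_def by blast
  have sh: "Suc (h-1) = h" using h by simp
  have lt: "Suc (h-1) < length p" using L h by simp
  have "{p ! (h-1), p ! Suc (h-1)} \<in> H" using edH lt by blast
  then have "{p ! (h-1), p ! h} \<in> H" by (simp only: sh)
  moreover have "p ! (h-1) = sg k m (h-1)" "p ! h = sg k m h" using pi h by simp_all
  ultimately show ?thesis unfolding ed_def by simp
qed

lemma card_Ed: "card (Ed k) = k * (2*k+1)"
proof -
  have "Ed k = (\<lambda>(m,h). ed k m h) ` ({1..k} \<times> {1..2*k+1})"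
  proof (rule equalityI)
    show "Ed k \<subseteq> (\<lambda>(m,h). ed k m h) ` ({1..k} \<times> {1..2*k+1})"
    proof
      fix e assume "e \<in> Ed k"
      then obtain m h where v: "1 \<le> m" "m \<le> k" "1 \<le> h" "h \<le> 2*k+1" and e: "e = ed k m h"
        unfolding Ed_def by auto
      have "(m,h) \<in> {1..k} \<times> {1..2*k+1}" using v by simp
      then show "e \<in> (\<lambda>(m,h). ed k m h) ` ({1..k} \<times> {1..2*k+1})"
        unfolding e by (rule image_eqI[rotated]) simp
    qed
  next
    show "(\<lambda>(m,h). ed k m h) ` ({1..k} \<times> {1..2*k+1}) \<subseteq> Ed k"
    proof
      fix e assume "e \<in> (\<lambda>(m,h). ed k m h) ` ({1..k} \<times> {1..2*k+1})"
      then obtain x where xA: "x \<in> {1..k} \<times> {1..2*k+1}" and e: "e = (\<lambda>(m,h). ed k m h) x" by blast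
      obtain m h where x: "x = (m,h)" by (cases x)
      have vx: "1 \<le> m" "m \<le> k" "1 \<le> h" "h \<le> 2*k+1" using xA x by auto
      show "e \<in> Ed k" using ed_in_Ed[OF vx] e x by simp
    qed
  qed
  moreover have inj: "inj_on (\<lambda>(m,h). ed k m h) ({1..k} \<times> {1..2*k+1})"
  proof (rule inj_onI)
    fix x y assume xA: "x \<in> {1..k} \<times> {1..2*k+1}" and yA: "y \<in> {1..k} \<times> {1..2*k+1}"
      and eq: "(\<lambda>(m,h). ed k m h) x = (\<lambda>(m,h). ed k m h) y"
    obtain m h where x: "x = (m,h)" by (cases x)
    obtain m' h' where y: "y = (m',h')" by (cases y)
    have vx: "1 \<le> m" "m \<le> k" "1 \<le> h" "h \<le> 2*k+1" using xA x by auto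
    have vy: "1 \<le> m'" "m' \<le> k" "1 \<le> h'" "h' \<le> 2*k+1" using yA y by auto
    have "ed k m h = ed k m' h'" using eq x y by simp
    then have "m = m' \<and> h = h'" using ed_inj[OF vx vy] by blast
    then show "x = y" using x y by simp
  qed
  have "card ((\<lambda>(m,h). ed k m h) ` ({1..k} \<times> {1..2*k+1})) = card ({1..k} \<times> {1..2*k+1::nat})"
    by (rule card_image[OF inj])
  also have "... = k * (2*k+1)" by (simp add: card_cartesian_product)
  finally show ?thesis using \<open>Ed k = _\<close> by simp
qed

lemma Ed_graph:
  assumes "7*k < n"
  shows "temporal_graph {0..<n} (Ed k) (lb k)"
  unfolding temporal_graph_def
proof (intro conjI)
  show "finite {0..<n}" by simp
  show "Ed k \<subseteq> {{u, v} |u v. u \<in> {0..<n} \<and> v \<in> {0..<n} \<and> u \<noteq> v}"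
  proof
    fix e assume "e \<in> Ed k"
    then obtain m h where v: "1 \<le> m" "m \<le> k" "1 \<le> h" "h \<le> 2*k+1" and e: "e = ed k m h"
      unfolding Ed_def by auto
    have hl: "h-1 \<le> 2*k+1" using v by simp
    have "sg k m (h-1) \<noteq> sg k m h"
    proof
      assume "sg k m (h-1) = sg k m h"
      then have "h-1 = h" using sg_inj[OF v(1,2) hl v(4)] by blast
      then show False using v(3) by simp
    qed
    moreover have "sg k m (h-1) \<le> 7*k" "sg k m h \<le> 7*k" using sg_range[OF v(1,2)] v by simp_all
    then have "sg k m (h-1) < n" "sg k m h < n" using assms by linarith+
    ultimately show "e \<in> {{u, v} |u v. u \<in> {0..<n} \<and> v \<in> {0..<n} \<and> u \<noteq> v}"
      unfolding e ed_def by auto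
  qed
  show "\<forall>e\<in>Ed k. 0 < lb k e"
  proof
    fix e assume "e \<in> Ed k"
    then obtain m h where v: "1 \<le> m" "m \<le> k" "1 \<le> h" "h \<le> 2*k+1" and e: "e = ed k m h"
      unfolding Ed_def by auto
    show "0 < lb k e" using lb_ed[OF v] v e by simp
  qed
qed

lemma arith1:
  fixes n k :: nat
  assumes k1: "1 \<le> k" and nk: "n \<le> 16*k" and nk2: "8*k \<le> n"
  shows "real n ^ 2 \<le> 128 * real (k * (2*k+1))" "real (k * (2*k+1)) \<le> real n ^ 2"
proof -
  have a: "n*n \<le> (16*k)*(16*k)" by (rule mult_le_mono[OF nk nk])
  have b: "(16*k)*(16*k) \<le> 128 * (k * (2*k+1))" by (simp add: algebra_simps)
  have "n*n \<le> 128 * (k * (2*k+1))" using a b by (rule le_trans)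
  then have "real (n*n) \<le> real (128 * (k * (2*k+1)))" by (metis of_nat_le_iff)
  then show "real n ^ 2 \<le> 128 * real (k * (2*k+1))" by (simp add: power2_eq_square)
  have c: "(8*k)*(8*k) \<le> n*n" by (rule mult_le_mono[OF nk2 nk2])
  have d: "k * (2*k+1) \<le> (8*k)*(8*k)" by (simp add: algebra_simps)
  have "k * (2*k+1) \<le> n*n" using d c by (rule le_trans)
  then have "real (k * (2*k+1)) \<le> real (n*n)" by (metis of_nat_le_iff)
  then show "real (k * (2*k+1)) \<le> real n ^ 2" by (simp add: power2_eq_square)
qed

theorem corollary14:
  shows "\<exists>(c::real) (C::real) (N::nat). c > 0 \<and> C > 0 \<and>
    (\<forall>n::nat. n \<ge> 1 \<longrightarrow>
      (\<exists>(V::nat set) E lam s. temporal_graph V E lam \<and> card V = n \<and> s \<in> V \<and>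
         (\<forall>H. ss_temporal_preserver V E lam s H \<longrightarrow>
            (n \<ge> N \<longrightarrow> c * real n ^ 2 \<le> real (card H) \<and> real (card H) \<le> C * real n ^ 2))))"
proof (rule exI[of _ "1/128::real"], rule exI[of _ "1::real"], rule exI[of _ "8::nat"], intro conjI allI impI)
  fix n :: nat assume n1: "1 \<le> n"
  define k where "k = n div 8"
  have nm: "8*k + n mod 8 = n" unfolding k_def by (rule mult_div_mod_eq)
  have nm8: "n mod 8 < 8" by simp
  have n78: "7*k < n" using n1 nm by linarith
  have V: "{0..7*k} \<subseteq> {0..<n}" using n78 by auto
  show "\<exists>(V::nat set) E lam s. temporal_graph V E lam \<and> card V = n \<and> s \<in> V \<and>
         (\<forall>H. ss_temporal_preserver V E lam s H \<longrightarrow>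
            (n \<ge> 8 \<longrightarrow> 1/128 * real n ^ 2 \<le> real (card H) \<and> real (card H) \<le> 1 * real n ^ 2))"
  proof (intro exI[of _ "{0..<n}"] exI[of _ "Ed k"] exI[of _ "lb k"] exI[of _ 0] conjI allI impI)
    show "temporal_graph {0..<n} (Ed k) (lb k)" using Ed_graph[OF n78] .
    show "card {0..<n} = n" by simp
    show "0 \<in> {0..<n}" using n1 by simp
    fix H assume pres: "ss_temporal_preserver {0..<n} (Ed k) (lb k) 0 H" and n8: "8 \<le> n"
    have sub: "H \<subseteq> Ed k" using pres unfolding ss_temporal_preserver_def by simp
    have "Ed k \<subseteq> H"
    proof
      fix e assume "e \<in> Ed k"
      then obtain m h where v: "1 \<le> m" "m \<le> k" "1 \<le> h" "h \<le> 2*k+1" and e: "e = ed k m h"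
        unfolding Ed_def by auto
      have "sg k m (2*k+1) \<in> {0..<n}" using sg_range[of m k "2*k+1"] v n78 by simp
      then have "temporal_dist {0..<n} H (lb k) 0 (sg k m (2*k+1)) = temporal_dist {0..<n} (Ed k) (lb k) 0 (sg k m (2*k+1))"
        using pres unfolding ss_temporal_preserver_def by blast
      then show "e \<in> H" using pres_contains[OF v(1,2) V sub _ v(3,4)] e by simp
    qed
    then have "H = Ed k" using sub by blast
    then have cH: "card H = k * (2*k+1)" using card_Ed by simp
    have k1: "1 \<le> k" using n8 nm nm8 by linarith
    have nk: "n \<le> 16*k" using k1 nm nm8 by linarith
    have nk2: "8*k \<le> n" using nm by linarith
    have lo': "real n ^ 2 \<le> 128 * real (k * (2*k+1))" using arith1(1)[OF k1 nk nk2] .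
    have hi': "real (k * (2*k+1)) \<le> real n ^ 2" using arith1(2)[OF k1 nk nk2] .
    show "1/128 * real n ^ 2 \<le> real (card H)" using lo' cH by simp
    show "real (card H) \<le> 1 * real n ^ 2" using hi' cH by simp
  qed
qed (auto)

end
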